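(* Let $n>1$, let $L_1,\dots,L_n$ be complete lattices, let $f:L_1\times\dots\times L_n\to L_1\times\dots\times L_n$ be monotone, let $B$ be a binding map on $\{1,\dots,n\}$, let $i,j\in\{1,\dots,n\}$ and $a_j\in L_j$. If $i<j$, then \[ nested(n,i,B(j\coloneq a_j),f)=nested(n-1,i,Sp_jB,Sp_{j,a_j}f). \] If $i>j$, then \[ nested(n,i,B(j\coloneq a_j),f)=nested(n-1,i-1,Sp_jB,Sp_{j,a_j}f). \]
   Context: For any $m\ge1$, complete lattices $M_1,\dots,M_m$ and monotone $g:M_1\times\dots\times M_m\to M_1\times\dots\times M_m$ with projections $g_1,\dots,g_m$: a binding map is a map $B:\{1,\dots,m\}\to\big(\bigsqcup_k M_k\big)\sqcup\{undef\}$ with $B(k)\in M_k$ whenever $B(k)\neq undef$ ($undef$ is a special symbol meaning "unbound"); $B(j\coloneq v)$ is the map sending $j$ to $v$ and $k\neq j$ to $B(k)$. The nested fixpoint is defined recursively by \[ nested(m,i,B,g)=\mu x_i.\, g_i(v(x_i)), \] where $v(x_i)\in M_1\times\dots\times M_m$ has $k$-th coordinate: $x_i$ if $k=i$; otherwise $B(k)$ if $B(k)\neq undef$; otherwise $nested(m,k,B(i\coloneq x_i),g)$. Here $\mu x_i.\,h(x_i)$ is the least fixed point of the monotone map $h$ on $M_i$ (the recursion terminates since each recursive call binds a previously unbound coordinate). Specialization: for $f$ on $L_1\times\dots\times L_n$, $j\in\{1,\dots,n\}$ and $a_j\in L_j$, identify $L_1\times\dots\times\widehat{L_j}\times\dots\times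 L_n$ with a product of $n-1$ lattices indexed by $1,\dots,n-1$ (coordinate $h<j$ is $L_h$, coordinate $h\ge j$ is $L_{h+1}$). For $\vec y=(y_1,\dots,y_{n-1})$ let $E_{j,a_j}\vec y=(y_1,\dots,y_{j-1},a_j,y_j,\dots,y_{n-1})\in L_1\times\dots\times L_n$. Then $Sp_{j,a_j}f$ is the monotone self-map of this $(n-1)$-fold product with coordinates $(Sp_{j,a_j}f)_h(\vec y)=f_h(E_{j,a_j}\vec y)$ for $1\le h<j$ and $(Sp_{j,a_j}f)_h(\vec y)=f_{h+1}(E_{j,a_j}\vec y)$ for $j\le h\le n-1$. Correspondingly, $Sp_jB$ is the binding map on $\{1,\dots,n-1\}$ with $(Sp_jB)(h)=B(h)$ for $h<j$ and $(Sp_jB)(h)=B(h+1)$ for $j\le h\le n-1$. *)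

theory Defs
  imports "HOL-Algebra.Complete_Lattice" "HOL-Library.FuncSet"
begin

text \<open>A family of complete lattices M_1,...,M_m is modelled by
  L :: nat => 'a gorder, where the k-th lattice is L k (only k in {1..m} matters);
  all lattices live in one ambient type 'a (any family embeds into a disjoint union).
  Elements of M_1 x ... x M_m are extensional functions nat => 'a on {1..m}
  (the set prod_carrier L m).  A binding map is B :: nat => 'a option,
  None meaning undef.  mu is the least fixed point LFP of HOL-Algebra.\<close>

definition prod_carrier :: "(nat \<Rightarrow> 'a gorder) \<Rightarrow> nat \<Rightarrow> (nat \<Rightarrow> 'a) set" where
  "prod_carrier L m = (\<Pi>\<^sub>E k\<in>{1..m}. carrier (L k))"

definition prod_le :: "(nat \<Rightarrow> 'a gorder) \<Rightarrow> nat \<Rightarrow> (nat \<Rightarrow> 'a) \<Rightarrow> (nat \<Rightarrow> 'a) \<Rightarrow> bool" where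
  "prod_le L m x y = (\<forall>k\<in>{1..m}. le (L k) (x k) (y k))"

definition prod_mono :: "(nat \<Rightarrow> 'a gorder) \<Rightarrow> nat \<Rightarrow> ((nat \<Rightarrow> 'a) \<Rightarrow> (nat \<Rightarrow> 'a)) \<Rightarrow> bool" where
  "prod_mono L m g = (\<forall>x\<in>prod_carrier L m. \<forall>y\<in>prod_carrier L m.
      prod_le L m x y \<longrightarrow> prod_le L m (g x) (g y))"

definition binding_map :: "(nat \<Rightarrow> 'a gorder) \<Rightarrow> nat \<Rightarrow> (nat \<Rightarrow> 'a option) \<Rightarrow> bool" where
  "binding_map L m B = (\<forall>k\<in>{1..m}. \<forall>b. B k = Some b \<longrightarrow> b \<in> carrier (L k))"

definition bvec :: "nat \<Rightarrow> nat \<Rightarrow> 'a \<Rightarrow> (nat \<Rightarrow> 'a option) \<Rightarrow> (nat \<Rightarrow> 'a) \<Rightarrow> (nat \<Rightarrow> 'a)" where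
  "bvec m i x B r = (\<lambda>k. if k \<in> {1..m} then
      (if k = i then x else (case B k of Some b \<Rightarrow> b | None \<Rightarrow> r k)) else undefined)"

text \<open>The recursion of nested is well-founded: the number of unbound coordinates
  other than the current one strictly decreases with each recursive call and is
  at most m.  We implement it with a fuel parameter; fuel m is always sufficient
  (at fuel 0 no unbound coordinate other than i remains in any call reached).\<close>
primrec nested_fuel :: "(nat \<Rightarrow> 'a gorder) \<Rightarrow> nat \<Rightarrow> nat \<Rightarrow> nat \<Rightarrow> (nat \<Rightarrow> 'a option)
    \<Rightarrow> ((nat \<Rightarrow> 'a) \<Rightarrow> (nat \<Rightarrow> 'a)) \<Rightarrow> 'a" where
  "nested_fuel L m 0 i B g =
     LFP\<^bsub>L i\<^esub> (\<lambda>x. g (bvec m i x B (\<lambda>k. undefined)) i)"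
| "nested_fuel L m (Suc d) i B g =
     LFP\<^bsub>L i\<^esub> (\<lambda>x. g (bvec m i x B (\<lambda>k. nested_fuel L m d k (B(i := Some x)) g)) i)"

definition nested :: "(nat \<Rightarrow> 'a gorder) \<Rightarrow> nat \<Rightarrow> nat \<Rightarrow> (nat \<Rightarrow> 'a option)
    \<Rightarrow> ((nat \<Rightarrow> 'a) \<Rightarrow> (nat \<Rightarrow> 'a)) \<Rightarrow> 'a" where
  "nested L m i B g = nested_fuel L m m i B g"

definition Sp_lat :: "nat \<Rightarrow> (nat \<Rightarrow> 'a gorder) \<Rightarrow> (nat \<Rightarrow> 'a gorder)" where
  "Sp_lat j L = (\<lambda>h. if h < j then L h else L (h + 1))"

definition Ext :: "nat \<Rightarrow> nat \<Rightarrow> 'a \<Rightarrow> (nat \<Rightarrow> 'a) \<Rightarrow> (nat \<Rightarrow> 'a)" where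
  "Ext n j a y = (\<lambda>k. if k \<in> {1..n} then
      (if k < j then y k else if k = j then a else y (k - 1)) else undefined)"

definition Sp_fun :: "nat \<Rightarrow> nat \<Rightarrow> 'a \<Rightarrow> ((nat \<Rightarrow> 'a) \<Rightarrow> (nat \<Rightarrow> 'a)) \<Rightarrow> ((nat \<Rightarrow> 'a) \<Rightarrow> (nat \<Rightarrow> 'a))" where
  "Sp_fun n j a f = (\<lambda>y h. if h \<in> {1..n-1} then
      (if h < j then f (Ext n j a y) h else f (Ext n j a y) (h + 1)) else undefined)"

definition Sp_bind :: "nat \<Rightarrow> (nat \<Rightarrow> 'a option) \<Rightarrow> (nat \<Rightarrow> 'a option)" where
  "Sp_bind j B = (\<lambda>h. if h < j then B h else B (h + 1))"

end

theory Submission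
  imports Defs
begin

lemma bvec_Ext:
  assumes "j \<in> {1..n}" "i \<in> {1..(n::nat)}" "i \<noteq> j" "B j = Some a"
    and "i' = (if i < j then i else i - 1)"
    and "\<forall>K\<in>{1..n}. K \<noteq> i \<longrightarrow> B K = None \<longrightarrow> r K = r' (if K < j then K else K - 1)"
  shows "Ext n j a (bvec (n-1) i' x (Sp_bind j B) r') = bvec n i x B r"
proof
  fix K
  show "Ext n j a (bvec (n-1) i' x (Sp_bind j B) r') K = bvec n i x B r K"
  proof (cases "K \<in> {1..n}")
    case False
    have "Ext n j a y K = undefined" for y using False unfolding Ext_def by (simp only: if_False)
    moreover have "bvec n i x B r K = undefined" using False unfolding bvec_def by (simp only: if_False)
    ultimately show ?thesis by simp
  next
    case Kin: True
    have R: "bvec n i x B r K = (if K = i then x else (case B K of Some b \<Rightarrow> b | None \<Rightarrow> r K))"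
      using Kin by (simp add: bvec_def)
    show ?thesis
    proof (cases "K < j")
      case True
      have E: "Ext n j a y K = y K" for y using Kin True by (simp add: Ext_def)
      have K1: "K \<in> {1..n-1}" using Kin True assms(1) by auto
      have L: "bvec (n-1) i' x (Sp_bind j B) r' K = (if K = i' then x else (case B K of Some b \<Rightarrow> b | None \<Rightarrow> r' K))"
        using K1 True by (simp add: bvec_def Sp_bind_def)
      have ii: "(K = i') = (K = i)" using assms(3,5) True by auto
      show ?thesis unfolding E L R ii using assms(6) Kin True
        by (cases "B K") auto
    next
      case False
      show ?thesis
      proof (cases "K = j")
        case True 
        have E: "Ext n j a y K = a" for y using Kin True by (simp add: Ext_def)
        show ?thesis unfolding E R using True assms(3,4) by simp
      next
        case False
        then have Kj: "K > j" using \<open>\<not> K < j\<close> by simp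
        have E: "Ext n j a y K = y (K-1)" for y using Kin Kj by (simp add: Ext_def)
        have K1: "K - 1 \<in> {1..n-1}" using Kin Kj assms(1) by auto
        have sb: "Sp_bind j B (K-1) = B K" using Kj Kin by (auto simp add: Sp_bind_def)
        have L: "bvec (n-1) i' x (Sp_bind j B) r' (K-1) = (if K-1 = i' then x else (case B K of Some b \<Rightarrow> b | None \<Rightarrow> r' (K-1)))"
          using K1 sb unfolding bvec_def by (simp del: One_nat_def)
        have ii: "(K - 1 = i') = (K = i)" using assms(5) Kj assms(2) by auto
        show ?thesis unfolding E L R ii using assms(6) Kin Kj
          by (cases "B K") auto
      qed
    qed
  qed
qed

lemma Sp_bind_upd:
  assumes "i \<noteq> j" "i' = (if i < j then i else i - 1)" "(i::nat) \<ge> 1"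
  shows "Sp_bind j (B(i := v)) = (Sp_bind j B)(i' := v)"
  using assms by (auto simp: Sp_bind_def fun_eq_iff)

lemma LFP_cong_all:
  fixes L :: "('b,'c) gorder_scheme"
  assumes "\<And>x. F x = G x"
  shows "LFP\<^bsub>L\<^esub> F = LFP\<^bsub>L\<^esub> G"
proof -
  have "F = G" using assms by auto
  thus ?thesis by simp
qed

lemma key:
  fixes L :: "nat \<Rightarrow> 'a gorder" and f :: "(nat \<Rightarrow> 'a) \<Rightarrow> (nat \<Rightarrow> 'a)"
  assumes "j \<in> {1..n}"
  shows "\<forall>i B. B j = Some a \<longrightarrow> i \<noteq> j \<longrightarrow> i \<in> {1..n} \<longrightarrow>
     card {k\<in>{1..n}. B k = None \<and> k \<noteq> i} \<le> d \<longrightarrow>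
     nested_fuel L n (Suc d) i B f
       = nested_fuel (Sp_lat j L) (n-1) d (if i < j then i else i - 1) (Sp_bind j B) (Sp_fun n j a f)"
proof (induction d)
  case 0
  show ?case
  proof (intro allI impI)
    fix i B
    assume h: "B j = Some a" "i \<noteq> j" "i \<in> {1..n}" "card {k\<in>{1..n}. B k = None \<and> k \<noteq> i} \<le> 0"
    define i' where "i' = (if i < j then i else i - 1)"
    have none: "\<forall>K\<in>{1..n}. K \<noteq> i \<longrightarrow> B K = None \<longrightarrow> False"
      using h(4) by auto
    have lat: "Sp_lat j L i' = L i" using h assms by (auto simp: Sp_lat_def i'_def)
    have i'r: "i' \<in> {1..n-1}" using h assms by (auto simp: i'_def)
    have sf: "Sp_fun n j a f y i' = f (Ext n j a y) i" for y
      using i'r h by (auto simp: Sp_fun_def i'_def)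
    show "nested_fuel L n (Suc 0) i B f
       = nested_fuel (Sp_lat j L) (n-1) 0 (if i < j then i else i - 1) (Sp_bind j B) (Sp_fun n j a f)"
      unfolding i'_def[symmetric]
    proof (simp only: nested_fuel.simps(2)[of L n 0] nested_fuel.simps(1)[of "Sp_lat j L"] lat sf, rule LFP_cong_all)
      fix x
      have "Ext n j a (bvec (n-1) i' x (Sp_bind j B) (\<lambda>k. undefined)) = bvec n i x B (\<lambda>k. nested_fuel L n 0 k (B(i := Some x)) f)"
        by (rule bvec_Ext) (use assms h i'_def none in auto)
      then show "f (bvec n i x B (\<lambda>k. nested_fuel L n 0 k (B(i := Some x)) f)) i = f (Ext n j a (bvec (n-1) i' x (Sp_bind j B) (\<lambda>k. undefined))) i"
        by simp
    qed
  qed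
next
  case (Suc d)
  show ?case
  proof (intro allI impI)
    fix i B
    assume h: "B j = Some a" "i \<noteq> j" "i \<in> {1..n}" "card {k\<in>{1..n}. B k = None \<and> k \<noteq> i} \<le> Suc d"
    define i' where "i' = (if i < j then i else i - 1)"
    have lat: "Sp_lat j L i' = L i" using h assms by (auto simp: Sp_lat_def i'_def)
    have i'r: "i' \<in> {1..n-1}" using h assms by (auto simp: i'_def)
    have sf: "Sp_fun n j a f y i' = f (Ext n j a y) i" for y
      using i'r h by (auto simp: Sp_fun_def i'_def)
    have rr: "\<forall>K\<in>{1..n}. K \<noteq> i \<longrightarrow> B K = None \<longrightarrow>
        nested_fuel L n (Suc d) K (B(i := Some x)) f
        = nested_fuel (Sp_lat j L) (n - 1) d (if K < j then K else K - 1)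
            ((Sp_bind j B)(i' := Some x)) (Sp_fun n j a f)" for x
    proof (intro ballI impI)
      fix K assume K: "K \<in> {1..n}" "K \<noteq> i" "B K = None"
      have Kj: "K \<noteq> j" using K h by auto
      have eq: "{k\<in>{1..n}. (B(i := Some x)) k = None \<and> k \<noteq> K}
          = {k\<in>{1..n}. B k = None \<and> k \<noteq> i} - {K}" by auto
      have "card {k\<in>{1..n}. (B(i := Some x)) k = None \<and> k \<noteq> K} \<le> d"
        unfolding eq using h(4) K by (simp add: card_Diff_singleton)
      moreover have "(B(i := Some x)) j = Some a" using h by simp
      ultimately have "nested_fuel L n (Suc d) K (B(i := Some x)) f
        = nested_fuel (Sp_lat j L) (n - 1) d (if K < j then K else K - 1)
            (Sp_bind j (B(i := Some x))) (Sp_fun n j a f)"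
        using Suc.IH Kj K by blast
      also have "Sp_bind j (B(i := Some x)) = (Sp_bind j B)(i' := Some x)"
        by (rule Sp_bind_upd) (use h i'_def in auto)
      finally show "nested_fuel L n (Suc d) K (B(i := Some x)) f
        = nested_fuel (Sp_lat j L) (n - 1) d (if K < j then K else K - 1)
            ((Sp_bind j B)(i' := Some x)) (Sp_fun n j a f)" .
    qed
    show "nested_fuel L n (Suc (Suc d)) i B f
       = nested_fuel (Sp_lat j L) (n-1) (Suc d) (if i < j then i else i - 1) (Sp_bind j B) (Sp_fun n j a f)"
      unfolding i'_def[symmetric]
    proof (simp only: nested_fuel.simps(2)[of L n "Suc d"] nested_fuel.simps(2)[of "Sp_lat j L" "n-1" d] lat sf, rule LFP_cong_all)
      fix x
      have "Ext n j a (bvec (n-1) i' x (Sp_bind j B) (\<lambda>k. nested_fuel (Sp_lat j L) (n - 1) d k ((Sp_bind j B)(i' := Some x)) (Sp_fun n j a f)))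
         = bvec n i x B (\<lambda>k. nested_fuel L n (Suc d) k (B(i := Some x)) f)"
        by (rule bvec_Ext) (use assms h i'_def rr in auto)
      then show "f (bvec n i x B (\<lambda>k. nested_fuel L n (Suc d) k (B(i := Some x)) f)) i = f (Ext n j a (bvec (n-1) i' x (Sp_bind j B) (\<lambda>k. nested_fuel (Sp_lat j L) (n - 1) d k ((Sp_bind j B)(i' := Some x)) (Sp_fun n j a f)))) i"
        by simp
    qed
  qed
qed

theorem mainTheorem2:
  fixes L :: "nat \<Rightarrow> 'a gorder" and n i j :: nat and a :: 'a
    and f :: "(nat \<Rightarrow> 'a) \<Rightarrow> (nat \<Rightarrow> 'a)" and B :: "nat \<Rightarrow> 'a option"
  assumes "n > 1"
    and "\<forall>k\<in>{1..n}. complete_lattice (L k)"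
    and "f \<in> prod_carrier L n \<rightarrow> prod_carrier L n"
    and "prod_mono L n f"
    and "binding_map L n B"
    and "i \<in> {1..n}" and "j \<in> {1..n}"
    and "a \<in> carrier (L j)"
  shows "(i < j \<longrightarrow> nested L n i (B(j := Some a)) f
            = nested (Sp_lat j L) (n - 1) i (Sp_bind j B) (Sp_fun n j a f))
       \<and> (i > j \<longrightarrow> nested L n i (B(j := Some a)) f
            = nested (Sp_lat j L) (n - 1) (i - 1) (Sp_bind j B) (Sp_fun n j a f))"
proof -
  have sb: "Sp_bind j (B(j := Some a)) = Sp_bind j B"
    by (auto simp: Sp_bind_def fun_eq_iff)
  have sub: "{k\<in>{1..n}. (B(j := Some a)) k = None \<and> k \<noteq> i} \<subseteq> {1..n} - {j}" by auto
  have "card {k\<in>{1..n}. (B(j := Some a)) k = None \<and> k \<noteq> i} \<le> n - 1"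
    using card_mono[OF _ sub] assms(7) by simp
  then have gen: "i \<noteq> j \<Longrightarrow> nested L n i (B(j := Some a)) f
     = nested (Sp_lat j L) (n-1) (if i < j then i else i - 1) (Sp_bind j B) (Sp_fun n j a f)"
  proof -
    assume c: "card {k\<in>{1..n}. (B(j := Some a)) k = None \<and> k \<noteq> i} \<le> n - 1" and ij: "i \<noteq> j"
    have n: "n = Suc (n - 1)" using assms(1) by simp
    have "nested_fuel L n (Suc (n-1)) i (B(j := Some a)) f
       = nested_fuel (Sp_lat j L) (n-1) (n-1) (if i < j then i else i - 1) (Sp_bind j (B(j := Some a))) (Sp_fun n j a f)"
      using key[OF assms(7), of a "n-1" L f] ij assms(6) c by simp
    then show ?thesis unfolding nested_def sb using n by simp
  qed
  show ?thesis using gen by auto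
qed

end
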